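(* Let $a_2,a_3$ be integers with $1<a_2<a_3$, $A=\{1,a_2,a_3\}$, and write $a_3=C_2a_2+C_1$ with $0\le C_1<a_2$. If $a_2-C_2\le C_1<a_2$, or if $C_1=0$, then the fundamental stride generator for $A$ is of order $0$.
   Context: For integers $n$ and $i\ge 0$, an integer $x$ has an $n$-generation of order $i$ if there are integers $c_1,c_2\ge 0$ with $x+ia_3=c_2a_2+c_1$ and $c_1+c_2\le n+i$. For integers $n$ and $p\ge0$, $SG(A,n,p)$ is a stride generator (of order $p$) if: (A) every integer $0\le x<a_3$ has an $n$-generation of some order $\le p$; (B) at least one integer $0\le x<a_3$ has no $n$-generation of order $<p$; (C) at least one integer $0\le y<a_3$ has no $(n-1)$-generation of any order $\le p+1$. A stride generator $SG(A,n,p)$ is the fundamental stride generator for $A$ if there is no stride generator $SG(A,n',p')$ with $n'>n$. *)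

theory Defs
  imports Main
begin

text \<open>The set A = {1, a2, a3} is represented by the pair of integers a2, a3.\<close>

definition has_gen :: "int \<Rightarrow> int \<Rightarrow> int \<Rightarrow> nat \<Rightarrow> int \<Rightarrow> bool" where
  "has_gen a2 a3 n i x \<longleftrightarrow>
     (\<exists>c1 c2::int. c1 \<ge> 0 \<and> c2 \<ge> 0 \<and> x + int i * a3 = c2 * a2 + c1 \<and> c1 + c2 \<le> n + int i)"

definition stride_gen :: "int \<Rightarrow> int \<Rightarrow> int \<Rightarrow> nat \<Rightarrow> bool" where
  "stride_gen a2 a3 n p \<longleftrightarrow>
     (\<forall>x. 0 \<le> x \<and> x < a3 \<longrightarrow> (\<exists>i\<le>p. has_gen a2 a3 n i x)) \<and>
     (\<exists>x. 0 \<le> x \<and> x < a3 \<and> (\<forall>i<p. \<not> has_gen a2 a3 n i x)) \<and>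
     (\<exists>y. 0 \<le> y \<and> y < a3 \<and> (\<forall>i\<le>p + 1. \<not> has_gen a2 a3 (n - 1) i y))"

definition fundamental_stride_gen :: "int \<Rightarrow> int \<Rightarrow> int \<Rightarrow> nat \<Rightarrow> bool" where
  "fundamental_stride_gen a2 a3 n p \<longleftrightarrow>
     stride_gen a2 a3 n p \<and> \<not> (\<exists>n' p'. n' > n \<and> stride_gen a2 a3 n' p')"

end

theory Submission
  imports Defs
begin

lemma dm: fixes q r a :: int assumes "0 \<le> r" "r < a" shows "(q*a+r) div a = q" "(q*a+r) mod a = r"
  using assms by (auto simp: div_pos_pos_trivial mod_pos_pos_trivial)

lemma lowb:
  fixes a2 c1 c2 y :: int
  assumes "a2 > 0" "c1 \<ge> 0" "c2 \<ge> 0" "y = c2 * a2 + c1"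
  shows "y div a2 + y mod a2 \<le> c1 + c2"
proof -
  define q r where "q = c1 div a2" and "r = c1 mod a2"
  have c1: "c1 = q * a2 + r" using q_def r_def by simp
  have r: "0 \<le> r" "r < a2" using r_def assms by auto
  have q: "q \<ge> 0" using q_def assms by (simp add: div_int_pos_iff)
  have y: "y = (c2 + q) * a2 + r" using assms c1 by (simp add: algebra_simps)
  have "y div a2 = c2 + q" using y r by (simp add: div_add_self1 div_pos_pos_trivial)
  moreover have "y mod a2 = r" using y r by (simp add: mod_pos_pos_trivial)
  moreover have "q \<le> q * a2" using q assms(1) by (simp add: mult_le_cancel_left1)
  ultimately show ?thesis using c1 by linarith
qed

lemma not_gen:
  fixes a2 a3 n :: int
  assumes "a2 > 0" "x + int i * a3 \<ge> 0"
    "(x + int i * a3) div a2 + (x + int i * a3) mod a2 > n + int i"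
  shows "\<not> has_gen a2 a3 n i x"
  unfolding has_gen_def
proof
  assume "\<exists>c1 c2. 0 \<le> c1 \<and> 0 \<le> c2 \<and> x + int i * a3 = c2 * a2 + c1 \<and> c1 + c2 \<le> n + int i"
  then obtain c1 c2 where h: "0 \<le> c1" "0 \<le> c2" "x + int i * a3 = c2 * a2 + c1" "c1 + c2 \<le> n + int i" by blast
  from lowb[OF assms(1) h(1,2) h(3)] h(4) assms(3) show False by linarith
qed

theorem lemma15:
  fixes a2 a3 n :: int and p :: nat
  assumes "1 < a2" and "a2 < a3"
    and "(a2 - a3 div a2 \<le> a3 mod a2 \<and> a3 mod a2 < a2) \<or> a3 mod a2 = 0"
    and "fundamental_stride_gen a2 a3 n p"
  shows "p = 0"
proof (rule ccontr)
  assume p0: "p \<noteq> 0"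
  define C2 C1 where "C2 = a3 div a2" and "C1 = a3 mod a2"
  have a3: "a3 = C2 * a2 + C1" using C2_def C1_def by simp
  have C1: "0 \<le> C1" "C1 < a2" using C1_def assms(1) by auto
  have C2: "C2 \<ge> 1"
  proof (rule ccontr)
    assume "\<not> C2 \<ge> 1"
    hence "C2 \<le> 0" by simp
    hence "C2 * a2 \<le> 0" using assms(1) by (simp add: mult_nonpos_nonneg)
    thus False using a3 C1 assms(2) by linarith
  qed
  have cond: "a2 \<le> C1 + C2 \<or> C1 = 0" using assms(3) C1_def C2_def by linarith
  define M where "M = C2 + a2 - 2"
  have A: "has_gen a2 a3 M 0 x" if "0 \<le> x" "x < a3" for x
  proof -
    have "x div a2 \<le> C2"
    proof (rule ccontr)
      assume "\<not> x div a2 \<le> C2"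
      hence "x div a2 \<ge> C2 + 1" by simp
      hence "(C2+1) * a2 \<le> x div a2 * a2" using assms(1) by (simp add: mult_right_mono)
      moreover have "x div a2 * a2 \<le> x" by (simp add: assms(1) [THEN less_trans[OF zero_less_one]] minus_mod_eq_div_mult[symmetric])
      ultimately show False using a3 C1 that by (simp add: algebra_simps)
    qed
    moreover have "x div a2 = C2 \<Longrightarrow> x mod a2 < C1"
    proof -
      assume e: "x div a2 = C2"
      have "x = x div a2 * a2 + x mod a2" by simp
      hence "x = C2 * a2 + x mod a2" using e by simp
      thus ?thesis using a3 that by linarith
    qed
    moreover have "x mod a2 \<le> a2 - 1" using assms(1) by (simp add: int_one_le_iff_zero_less[symmetric])
    ultimately have "x div a2 + x mod a2 \<le> M" unfolding M_def
      by (smt (verit) C1(2))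
    moreover have "x mod a2 \<ge> 0" "x div a2 \<ge> 0" using assms(1) that by (auto simp: pos_imp_zdiv_nonneg_iff)
    ultimately show ?thesis unfolding has_gen_def
      by (rule_tac x="x mod a2" in exI, rule_tac x="x div a2" in exI) simp
  qed
  have SG: "stride_gen a2 a3 M 0"
    unfolding stride_gen_def
  proof (intro conjI)
    show "\<forall>x. 0 \<le> x \<and> x < a3 \<longrightarrow> (\<exists>i\<le>0. has_gen a2 a3 M i x)" using A by auto
    show "\<exists>x\<ge>0. x < a3 \<and> (\<forall>i<0. \<not> has_gen a2 a3 M i x)" using assms by (rule_tac x=0 in exI) auto
    define x0 where "x0 = C2 * a2 - 1"
    have x0: "0 \<le> x0" "x0 < a3"
      using C2 assms(1) a3 C1 unfolding x0_def by (smt (verit) mult_le_cancel_right1)+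
    have d0: "x0 div a2 = C2 - 1" "x0 mod a2 = a2 - 1"
    proof -
      have e: "x0 = (C2 - 1) * a2 + (a2 - 1)" unfolding x0_def by (simp add: algebra_simps)
      show "x0 div a2 = C2 - 1" unfolding e using assms(1) C1 by (intro dm) auto
      show "x0 mod a2 = a2 - 1" unfolding e using assms(1) by (intro dm) auto
    qed
    have g0: "\<not> has_gen a2 a3 (M - 1) 0 x0"
      by (rule not_gen) (use assms(1) x0 d0 M_def in auto)
    have "(x0 + a3) div a2 + (x0 + a3) mod a2 > M - 1 + 1"
    proof (cases "C1 = 0")
      case True
      have e: "x0 + a3 = (2*C2 - 1) * a2 + (a2 - 1)" unfolding x0_def a3 True by (simp add: algebra_simps)
      have "(x0 + a3) div a2 = 2*C2 - 1" unfolding e using assms(1) C1 by (intro dm) auto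
      moreover have "(x0 + a3) mod a2 = a2 - 1" unfolding e using assms(1) by (intro dm) auto
      ultimately show ?thesis using C2 M_def by simp
    next
      case False
      have e: "x0 + a3 = (2*C2) * a2 + (C1 - 1)" unfolding x0_def a3 by (simp add: algebra_simps)
      have "(x0 + a3) div a2 = 2*C2" unfolding e using assms(1) C1 False by (intro dm) auto
      moreover have "(x0 + a3) mod a2 = C1 - 1" unfolding e using assms(1) C1 False by (intro dm) auto
      ultimately show ?thesis using cond False M_def by simp
    qed
    hence g1: "\<not> has_gen a2 a3 (M - 1) 1 x0"
      by (intro not_gen) (use assms x0 in auto)
    show "\<exists>y\<ge>0. y < a3 \<and> (\<forall>i\<le>0 + 1. \<not> has_gen a2 a3 (M - 1) i y)"
    proof (rule exI[of _ x0], intro conjI allI impI)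
      fix i :: nat assume "i \<le> 0 + 1"
      hence "i = 0 \<or> i = 1" by auto
      thus "\<not> has_gen a2 a3 (M - 1) i x0" using g0 g1 by auto
    qed (use x0 in auto)
  qed
  have nM: "n \<ge> M" using assms(4) SG unfolding fundamental_stride_gen_def by (meson not_le)
  from assms(4) obtain x where x: "0 \<le> x" "x < a3" "\<forall>i<p. \<not> has_gen a2 a3 n i x"
    unfolding fundamental_stride_gen_def stride_gen_def by blast
  have "has_gen a2 a3 n 0 x" using A[OF x(1,2)] nM unfolding has_gen_def by force
  thus False using x(3) p0 by auto
qed

end
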